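(* An undirected graph $G=(V,E)$ (finite or infinite) has at most one multiplex $M$ with $\widetilde M=V$.
   Context: A graph $G=(V,E)$ has vertex set $V$ and edge set $E\subseteq V^2$; it is undirected if $E$ is irreflexive and symmetric. Implication classes: on $E$ define $(a,b)\Gamma(a',b')$ iff either $a=a'$ and $(b,b')\notin E$, or $b=b'$ and $(a,a')\notin E$; the classes of the transitive closure $\Gamma^*$ are the implication classes. For an implication class $A$, $A^{-1}=\{(b,a):(a,b)\in A\}$ and the color class is $\widehat A=A\cup A^{-1}$. A simplex of rank $r\ge1$ is a complete sub-graph $S=(V_S,E_S)$ of $G$ on $r+1$ vertices whose distinct undirected edges lie in distinct color classes. A multiplex is a set of edges of the form $M(S)=\bigcup\{\widehat A:\widehat A\text{ a color class},\ \widehat A\cap E_S\neq\emptyset\}$ for a simplex $S$; $\widetilde M$ is the set of vertices spanned by $M$. *)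

theory Defs
  imports Main
begin

definition undirected_graph :: "'a set \<Rightarrow> ('a \<times> 'a) set \<Rightarrow> bool" where
  "undirected_graph V E \<longleftrightarrow> E \<subseteq> V \<times> V \<and> irrefl E \<and> sym E"

definition Gamma :: "('a \<times> 'a) set \<Rightarrow> (('a \<times> 'a) \<times> ('a \<times> 'a)) set" where
  "Gamma E = {((a,b),(a',b')). (a,b) \<in> E \<and> (a',b') \<in> E \<and>
       ((a = a' \<and> (b,b') \<notin> E) \<or> (b = b' \<and> (a,a') \<notin> E))}"

definition impl_class :: "('a \<times> 'a) set \<Rightarrow> 'a \<times> 'a \<Rightarrow> ('a \<times> 'a) set" where
  "impl_class E e = {f. (e, f) \<in> (Gamma E)\<^sup>+}"

definition implication_classes :: "('a \<times> 'a) set \<Rightarrow> ('a \<times> 'a) set set" where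
  "implication_classes E = impl_class E ` E"

definition color_of :: "('a \<times> 'a) set \<Rightarrow> ('a \<times> 'a) set" where
  "color_of A = A \<union> A\<inverse>"

definition color_classes :: "('a \<times> 'a) set \<Rightarrow> ('a \<times> 'a) set set" where
  "color_classes E = color_of ` implication_classes E"

definition sub_edges :: "('a \<times> 'a) set \<Rightarrow> 'a set \<Rightarrow> ('a \<times> 'a) set" where
  "sub_edges E VS = E \<inter> (VS \<times> VS)"

(* VS spans a simplex of rank r = card VS - 1 \<ge> 1: a complete subgraph on
   finitely many (\<ge> 2) vertices whose distinct undirected edges lie in distinct colour classes *)
definition simplex :: "'a set \<Rightarrow> ('a \<times> 'a) set \<Rightarrow> 'a set \<Rightarrow> bool" where
  "simplex V E VS \<longleftrightarrow> VS \<subseteq> V \<and> finite VS \<and> card VS \<ge> 2 \<and>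
     (\<forall>a\<in>VS. \<forall>b\<in>VS. a \<noteq> b \<longrightarrow> (a,b) \<in> E) \<and>
     (\<forall>a b c d. (a,b) \<in> sub_edges E VS \<longrightarrow> (c,d) \<in> sub_edges E VS \<longrightarrow> {a,b} \<noteq> {c,d} \<longrightarrow>
        (\<forall>C\<in>color_classes E. \<not> ((a,b) \<in> C \<and> (c,d) \<in> C)))"

definition multiplex_of :: "('a \<times> 'a) set \<Rightarrow> 'a set \<Rightarrow> ('a \<times> 'a) set" where
  "multiplex_of E VS = \<Union>{C \<in> color_classes E. C \<inter> sub_edges E VS \<noteq> {}}"

definition is_multiplex :: "'a set \<Rightarrow> ('a \<times> 'a) set \<Rightarrow> ('a \<times> 'a) set \<Rightarrow> bool" where
  "is_multiplex V E M \<longleftrightarrow> (\<exists>VS. simplex V E VS \<and> M = multiplex_of E VS)"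

(* \<tilde>M, the set of vertices spanned by the edge set M *)
definition spanned :: "('a \<times> 'a) set \<Rightarrow> 'a set" where
  "spanned M = fst ` M \<union> snd ` M"

end

theory Submission
  imports Defs
begin

locale ugr =
  fixes V :: "'a set" and E :: "('a \<times> 'a) set"
  assumes ug: "undirected_graph V E"
begin

lemma E_sub: "(a,b) \<in> E \<Longrightarrow> a \<in> V \<and> b \<in> V"
  using ug unfolding undirected_graph_def by blast

lemma irr: "(a,a) \<notin> E"
  using ug unfolding undirected_graph_def by (simp add: irreflD)

lemma symE: "(a,b) \<in> E \<Longrightarrow> (b,a) \<in> E"
  using ug unfolding undirected_graph_def by (simp add: symD)

abbreviation R where "R \<equiv> (Gamma E)\<^sup>+"

lemma G_E: "((a,b),(c,d)) \<in> Gamma E \<Longrightarrow> (a,b) \<in> E \<and> (c,d) \<in> E"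
  unfolding Gamma_def by blast

lemma G_refl: "(a,b) \<in> E \<Longrightarrow> ((a,b),(a,b)) \<in> Gamma E"
  unfolding Gamma_def using irr by blast

lemma G_sym: "(e,f) \<in> Gamma E \<Longrightarrow> (f,e) \<in> Gamma E"
  unfolding Gamma_def using symE by blast

lemma G_rev: "(e,f) \<in> Gamma E \<Longrightarrow> (prod.swap e, prod.swap f) \<in> Gamma E"
  unfolding Gamma_def using symE by auto

lemma R_E: "(e,f) \<in> R \<Longrightarrow> e \<in> E \<and> f \<in> E"
proof (induction rule: trancl_induct)
  case (base y) then show ?case using G_E by (metis prod.collapse)
next
  case (step y z) then show ?case using G_E by (metis prod.collapse)
qed

lemma R_refl: "e \<in> E \<Longrightarrow> (e,e) \<in> R"
  using G_refl by (metis prod.collapse r_into_trancl)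

lemma R_sym: "(e,f) \<in> R \<Longrightarrow> (f,e) \<in> R"
proof -
  have "sym (Gamma E)" using G_sym by (auto intro: symI)
  then have "sym R" by (rule sym_trancl)
  then show "(e,f) \<in> R \<Longrightarrow> (f,e) \<in> R" by (simp add: symD)
qed

lemma R_rev0: "(e,f) \<in> R \<Longrightarrow> (prod.swap e, prod.swap f) \<in> R"
proof (induction rule: trancl_induct)
  case (base y) then show ?case using G_rev by blast
next
  case (step y z) then show ?case using G_rev by (meson trancl_into_trancl)
qed

lemma R_rev: "((a,b),(c,d)) \<in> R \<Longrightarrow> ((b,a),(d,c)) \<in> R"
  using R_rev0 by fastforce

lemma R_trans: "(e,f) \<in> R \<Longrightarrow> (f,g) \<in> R \<Longrightarrow> (e,g) \<in> R"
  by (rule trancl_trans)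

definition sc where "sc e f \<longleftrightarrow> (e,f) \<in> R \<or> (e, prod.swap f) \<in> R"

lemma sc_E: "sc e f \<Longrightarrow> e \<in> E \<and> f \<in> E"
  unfolding sc_def using R_E by (metis prod.collapse swap_simp symE)

lemma sc_refl: "e \<in> E \<Longrightarrow> sc e e"
  unfolding sc_def using R_refl by blast

lemma sc_swap2: "sc e (a,b) \<longleftrightarrow> sc e (b,a)"
  unfolding sc_def by auto

lemma sc_sym: "sc e f \<Longrightarrow> sc f e"
  unfolding sc_def using R_sym R_rev0 by (metis swap_swap)

lemma sc_trans: "sc e f \<Longrightarrow> sc f g \<Longrightarrow> sc e g"
proof -
  assume a1: "sc e f" and a2: "sc f g"
  have rr: "(prod.swap x, y) \<in> R \<Longrightarrow> (x, prod.swap y) \<in> R" for x y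
    using R_rev0 by fastforce
  from a1 a2 show ?thesis unfolding sc_def
    by (metis R_trans rr swap_swap)
qed

lemma sc_swap1: "sc (a,b) f \<longleftrightarrow> sc (b,a) f"
  by (metis sc_E sc_refl sc_swap2 sc_trans)

lemma R_sc: "(e,f) \<in> R \<Longrightarrow> sc e f"
  unfolding sc_def by blast

lemma col_eq: "color_of (impl_class E e) = {f. sc e f}"
  unfolding color_of_def impl_class_def sc_def by (auto simp: prod.swap_def)

lemma cc: "color_classes E = (\<lambda>e. {f. sc e f}) ` E"
  unfolding color_classes_def implication_classes_def by (simp add: image_image col_eq)

lemma simplex_distinct:
  assumes "simplex V E VS" "s \<in> VS" "t \<in> VS" "u \<in> VS" "w \<in> VS"
    "(s,t) \<in> E" "(u,w) \<in> E" "{s,t} \<noteq> {u,w}"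
  shows "\<not> sc (s,t) (u,w)"
proof
  assume h: "sc (s,t) (u,w)"
  have "{f. sc (s,t) f} \<in> color_classes E" using cc assms(6) by blast
  moreover have "(s,t) \<in> sub_edges E VS" "(u,w) \<in> sub_edges E VS"
    using assms unfolding sub_edges_def by auto
  moreover have "\<forall>a b c d. (a,b) \<in> sub_edges E VS \<longrightarrow> (c,d) \<in> sub_edges E VS \<longrightarrow> {a,b} \<noteq> {c,d} \<longrightarrow>
        (\<forall>C\<in>color_classes E. \<not> ((a,b) \<in> C \<and> (c,d) \<in> C))"
    using assms(1) unfolding simplex_def by (elim conjE)
  ultimately have "\<not> ((s,t) \<in> {f. sc (s,t) f} \<and> (u,w) \<in> {f. sc (s,t) f})"
    using assms(8) by blast
  then show False using h sc_refl[OF assms(6)] by simp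
qed

lemma simplex_edge: "simplex V E VS \<Longrightarrow> s \<in> VS \<Longrightarrow> t \<in> VS \<Longrightarrow> s \<noteq> t \<Longrightarrow> (s,t) \<in> E"
  unfolding simplex_def by blast

lemma mem_mult: "f \<in> multiplex_of E VS \<longleftrightarrow> (\<exists>s\<in>VS. \<exists>t\<in>VS. (s,t) \<in> E \<and> sc (s,t) f)"
proof
  assume "f \<in> multiplex_of E VS"
  then obtain e where e: "e \<in> E" "sc e f" "{g. sc e g} \<inter> sub_edges E VS \<noteq> {}"
    unfolding multiplex_of_def cc by auto
  then obtain s t where "sc e (s,t)" "(s,t) \<in> E" "s \<in> VS" "t \<in> VS"
    unfolding sub_edges_def by auto
  then show "\<exists>s\<in>VS. \<exists>t\<in>VS. (s,t) \<in> E \<and> sc (s,t) f"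
    using e sc_sym sc_trans by blast
next
  assume "\<exists>s\<in>VS. \<exists>t\<in>VS. (s,t) \<in> E \<and> sc (s,t) f"
  then obtain s t where st: "s \<in> VS" "t \<in> VS" "(s,t) \<in> E" "sc (s,t) f" by blast
  then have "(s,t) \<in> {g. sc (s,t) g} \<inter> sub_edges E VS"
    using sc_refl unfolding sub_edges_def by auto
  then show "f \<in> multiplex_of E VS" unfolding multiplex_of_def cc
    using st by blast
qed

lemma span_ex:
  assumes "spanned (multiplex_of E VS) = V" "v \<in> V"
  shows "\<exists>s\<in>VS. \<exists>t\<in>VS. (s,t) \<in> E \<and> (\<exists>w. sc (s,t) (v,w))"
proof -
  obtain f where f: "f \<in> multiplex_of E VS" "v = fst f \<or> v = snd f"
    using assms unfolding spanned_def by auto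
  then obtain s t where "s\<in>VS" "t\<in>VS" "(s,t) \<in> E" "sc (s,t) f" using mem_mult by blast
  then show ?thesis using f(2) sc_swap2 by (metis prod.collapse)
qed

lemma TL_step:
  assumes ab: "(a,b) \<in> E" and bc: "(b,c) \<in> E" and ac: "(a,c) \<in> E"
    and n1: "\<not> sc (b,c) (a,b)" and n2: "\<not> sc (b,c) (a,c)"
    and r: "((b,c),(x,y)) \<in> R" and g: "((x,y),(x',y')) \<in> Gamma E"
    and i1: "((a,b),(a,x)) \<in> R" and i2: "((c,a),(y,a)) \<in> R"
  shows "((a,b),(a,x')) \<in> R \<and> ((c,a),(y',a)) \<in> R"
proof -
  have r': "((b,c),(x',y')) \<in> R" using r g by (rule trancl_into_trancl)
  have ax: "(a,x) \<in> E" and ya: "(y,a) \<in> E" using R_E i1 i2 by auto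
  have e': "(x',y') \<in> E" using g G_E by blast
  from g consider (c1) "x' = x" "(y,y') \<notin> E" | (c2) "y' = y" "(x,x') \<notin> E"
    unfolding Gamma_def by blast
  then show ?thesis
  proof cases
    case c1
    have ay': "(a,y') \<in> E"
    proof (rule ccontr)
      assume na: "(a,y') \<notin> E"
      have "((a,x),(y',x)) \<in> Gamma E" unfolding Gamma_def
        using ax symE[OF e'] na c1 by auto
      then have "((a,b),(y',x)) \<in> R" by (rule trancl_into_trancl[OF i1])
      moreover have "((c,b),(y',x)) \<in> R" using R_rev[OF r'] c1 by simp
      ultimately have "((c,b),(a,b)) \<in> R" using R_sym R_trans by blast
      then have "((b,c),(b,a)) \<in> R" using R_rev by blast
      then show False using n1 unfolding sc_def by simp
    qed
    have "((y,a),(y',a)) \<in> Gamma E" unfolding Gamma_def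
      using ya symE[OF ay'] c1 by auto
    then have "((c,a),(y',a)) \<in> R" by (rule trancl_into_trancl[OF i2])
    then show ?thesis using i1 c1 by simp
  next
    case c2
    have ax': "(a,x') \<in> E"
    proof (rule ccontr)
      assume na: "(a,x') \<notin> E"
      have "((y,a),(y,x')) \<in> Gamma E" unfolding Gamma_def
        using ya symE[OF e'] na c2 by auto
      then have "((c,a),(y,x')) \<in> R" by (rule trancl_into_trancl[OF i2])
      moreover have "((c,b),(y,x')) \<in> R" using R_rev[OF r'] c2 by simp
      ultimately have "((c,a),(c,b)) \<in> R" using R_sym R_trans by blast
      then have "((a,c),(b,c)) \<in> R" using R_rev by blast
      then have "((b,c),(a,c)) \<in> R" using R_sym by blast
      then show False using n2 unfolding sc_def by simp
    qed
    have "((a,x),(a,x')) \<in> Gamma E" unfolding Gamma_def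
      using ax ax' c2 by auto
    then have "((a,b),(a,x')) \<in> R" by (rule trancl_into_trancl[OF i1])
    then show ?thesis using i2 c2 by simp
  qed
qed

lemma TL_inv:
  assumes ab: "(a,b) \<in> E" and bc: "(b,c) \<in> E" and ac: "(a,c) \<in> E"
    and n1: "\<not> sc (b,c) (a,b)" and n2: "\<not> sc (b,c) (a,c)"
    and r: "((b,c),f) \<in> R"
  shows "((a,b),(a,fst f)) \<in> R \<and> ((c,a),(snd f,a)) \<in> R"
  using r
proof (induction rule: trancl_induct)
  case (base g)
  have "((a,b),(a,b)) \<in> R" "((c,a),(c,a)) \<in> R"
    using R_refl ab ac symE by auto
  moreover have "((b,c),(b,c)) \<in> R" using R_refl bc by auto
  ultimately show ?case using TL_step[OF ab bc ac n1 n2, of b c "fst g" "snd g"] base by simp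
next
  case (step g h)
  then show ?case using TL_step[OF ab bc ac n1 n2, of "fst g" "snd g" "fst h" "snd h"] by simp
qed

lemma TLc:
  assumes ab: "(a,b) \<in> E" and bc: "(b,c) \<in> E" and ac: "(a,c) \<in> E"
    and n1: "\<not> sc (b,c) (a,b)" and n2: "\<not> sc (b,c) (a,c)"
    and s: "sc (b,c) (x,y)"
  shows "(a,x) \<in> E \<and> (a,y) \<in> E"
  using s unfolding sc_def
proof
  assume "((b,c),(x,y)) \<in> R"
  from TL_inv[OF ab bc ac n1 n2 this] show ?thesis using R_E symE by auto
next
  assume "((b,c),prod.swap (x,y)) \<in> R"
  from TL_inv[OF ab bc ac n1 n2 this] show ?thesis using R_E symE by auto
qed

lemma TLc_ne:
  assumes "(a,b) \<in> E" "(b,c) \<in> E" "(a,c) \<in> E"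
    "\<not> sc (b,c) (a,b)" "\<not> sc (b,c) (a,c)" "sc (b,c) (x,y)"
  shows "a \<noteq> x \<and> a \<noteq> y"
  using TLc[OF assms] irr by auto

lemma modl:
  assumes pq: "(p,q) \<in> E" and nv: "\<forall>x y. sc (p,q) (x,y) \<longrightarrow> v \<noteq> x \<and> v \<noteq> y"
    and vp: "(v,p) \<in> E" and s: "sc (p,q) (x,y)"
  shows "(v,x) \<in> E \<and> (v,y) \<in> E"
proof -
  have vq: "(v,q) \<in> E"
  proof (rule ccontr)
    assume "(v,q) \<notin> E"
    then have "((q,p),(v,p)) \<in> Gamma E" unfolding Gamma_def
      using symE[OF pq] vp symE by auto
    then have "sc (q,p) (v,p)" using R_sc by blast
    then have "sc (p,q) (v,p)" using sc_swap1 by blast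
    then show False using nv by blast
  qed
  have "\<not> sc (p,q) (v,p)" "\<not> sc (p,q) (v,q)" using nv by auto
  then show ?thesis using TLc[OF vp pq vq _ _ s] by blast
qed

definition NE where "NE = {(u,v). u \<in> V \<and> v \<in> V \<and> u \<noteq> v \<and> (u,v) \<notin> E}"

lemma Ks: "(u,v) \<in> NE\<^sup>* \<Longrightarrow> (v,u) \<in> NE\<^sup>*"
proof -
  have "sym NE" unfolding NE_def using symE by (auto intro: symI)
  then have "sym (NE\<^sup>*)" by (rule sym_rtrancl)
  then show "(u,v) \<in> NE\<^sup>* \<Longrightarrow> (v,u) \<in> NE\<^sup>*" by (simp add: symD)
qed

lemma Kt: "(u,v) \<in> NE\<^sup>* \<Longrightarrow> (v,w) \<in> NE\<^sup>* \<Longrightarrow> (u,w) \<in> NE\<^sup>*"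
  by (rule rtrancl_trans)

lemma NE_of: "u \<in> V \<Longrightarrow> v \<in> V \<Longrightarrow> (u,v) \<notin> E \<Longrightarrow> (u,v) \<in> NE\<^sup>*"
  by (cases "u = v") (auto simp: NE_def)

lemma lift1:
  assumes "(u,u') \<in> NE\<^sup>*" "(u,w) \<in> E" "(u,w) \<notin> NE\<^sup>*"
  shows "((u,w),(u',w)) \<in> R"
  using assms(1)
proof (induction rule: rtrancl_induct)
  case base then show ?case using R_refl assms(2) by blast
next
  case (step y z)
  have uz: "(u,z) \<in> NE\<^sup>*" using step(1,2) by (rule rtrancl_into_rtrancl)
  have yw: "(y,w) \<in> E" using R_E step(3) by blast
  have zV: "z \<in> V" "w \<in> V" using step(2) E_sub assms(2) unfolding NE_def by auto
  have "z \<noteq> w" using uz assms(3) by blast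
  have zw: "(z,w) \<in> E"
  proof (rule ccontr)
    assume "(z,w) \<notin> E"
    then have "(z,w) \<in> NE\<^sup>*" using NE_of zV by blast
    then show False using uz assms(3) Kt by blast
  qed
  have "(y,z) \<notin> E" using step(2) unfolding NE_def by auto
  then have "((y,w),(z,w)) \<in> Gamma E" unfolding Gamma_def using yw zw by auto
  then show ?case by (rule trancl_into_trancl[OF step(3)])
qed

lemma lift2:
  assumes "(w,w') \<in> NE\<^sup>*" "(u,w) \<in> E" "(u,w) \<notin> NE\<^sup>*"
  shows "((u,w),(u,w')) \<in> R"
proof -
  have "(w,u) \<notin> NE\<^sup>*" using assms(3) Ks by blast
  then have "((w,u),(w',u)) \<in> R" using lift1[OF assms(1)] symE[OF assms(2)] by blast
  then show ?thesis using R_rev by blast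
qed

lemma G_keep: "((x,y),(x',y')) \<in> Gamma E \<Longrightarrow> (x,x') \<in> NE\<^sup>* \<and> (y,y') \<in> NE\<^sup>*"
  unfolding Gamma_def using NE_of E_sub by auto

lemma R_keep:
  assumes "(e,f) \<in> R"
  shows "(fst e, fst f) \<in> NE\<^sup>* \<and> (snd e, snd f) \<in> NE\<^sup>*"
  using assms
proof (induction rule: trancl_induct)
  case (base y) then show ?case using G_keep by (metis prod.collapse)
next
  case (step y z) then show ?case using G_keep Kt by (metis prod.collapse)
qed

lemma sc_keep:
  assumes "sc (s,t) (x,y)"
  shows "((s,x) \<in> NE\<^sup>* \<and> (t,y) \<in> NE\<^sup>*) \<or> ((s,y) \<in> NE\<^sup>* \<and> (t,x) \<in> NE\<^sup>*)"
  using assms R_keep unfolding sc_def by fastforce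

lemma vert_comp:
  assumes "spanned (multiplex_of E VS) = V" "x \<in> V"
  shows "\<exists>s\<in>VS. (x,s) \<in> NE\<^sup>*"
proof -
  obtain s t w where "s \<in> VS" "t \<in> VS" "sc (s,t) (x,w)"
    using span_ex[OF assms] by blast
  then show ?thesis using sc_keep Ks by blast
qed

lemma caseA:
  assumes cA: "\<exists>u\<in>V. \<exists>v\<in>V. (u,v) \<notin> NE\<^sup>*"
    and S: "simplex V E VS" and sp: "spanned (multiplex_of E VS) = V"
  shows "multiplex_of E VS = {(u,v). (u,v) \<in> E \<and> (u,v) \<notin> NE\<^sup>*}"
proof -
  have distinct: "(s,t) \<notin> NE\<^sup>*" if st: "s \<in> VS" "t \<in> VS" "s \<noteq> t" for s t
  proof
    assume stK: "(s,t) \<in> NE\<^sup>*"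
    have "\<exists>w\<in>VS. (s,w) \<notin> NE\<^sup>*"
    proof (rule ccontr)
      assume "\<not> (\<exists>w\<in>VS. (s,w) \<notin> NE\<^sup>*)"
      then have all: "\<forall>x\<in>V. (x,s) \<in> NE\<^sup>*" using vert_comp[OF sp] Ks Kt by blast
      then show False using cA Ks Kt by blast
    qed
    then obtain w where w: "w \<in> VS" "(s,w) \<notin> NE\<^sup>*" by blast
    have wne: "w \<noteq> s" "w \<noteq> t" using w stK by auto
    have sw: "(s,w) \<in> E" using simplex_edge[OF S] st w wne by auto
    have tw: "(t,w) \<in> E" using simplex_edge[OF S] st w wne by auto
    have "((s,w),(t,w)) \<in> R" using lift1[OF stK sw w(2)] .
    then have "sc (s,w) (t,w)" by (rule R_sc)
    moreover have "{s,w} \<noteq> {t,w}" using st wne by (auto simp: doubleton_eq_iff)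
    ultimately show False using simplex_distinct[OF S st(1) w(1) st(2) w(1) sw tw] by blast
  qed
  show ?thesis
  proof (intro set_eqI iffI)
    fix f assume "f \<in> multiplex_of E VS"
    then obtain s t where st: "s\<in>VS" "t\<in>VS" "(s,t) \<in> E" "sc (s,t) f" using mem_mult by blast
    have "s \<noteq> t" using st(3) irr by auto
    then have nst: "(s,t) \<notin> NE\<^sup>*" using distinct st by blast
    obtain x y where f: "f = (x,y)" by fastforce
    have "(x,y) \<notin> NE\<^sup>*"
    proof
      assume xy: "(x,y) \<in> NE\<^sup>*"
      from sc_keep[OF st(4)[unfolded f]] show False
        using xy nst Ks Kt by blast
    qed
    moreover have "(x,y) \<in> E" using sc_E st(4) f by blast
    ultimately show "f \<in> {(u,v). (u,v) \<in> E \<and> (u,v) \<notin> NE\<^sup>*}" using f by simp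
  next
    fix f assume "f \<in> {(u,v). (u,v) \<in> E \<and> (u,v) \<notin> NE\<^sup>*}"
    then obtain u v where f: "f = (u,v)" "(u,v) \<in> E" "(u,v) \<notin> NE\<^sup>*" by blast
    have uV: "u \<in> V" "v \<in> V" using E_sub f(2) by auto
    obtain s where s: "s \<in> VS" "(u,s) \<in> NE\<^sup>*" using vert_comp[OF sp uV(1)] by blast
    obtain t where t: "t \<in> VS" "(v,t) \<in> NE\<^sup>*" using vert_comp[OF sp uV(2)] by blast
    have "s \<noteq> t" using s t f(3) Ks Kt by blast
    then have st: "(s,t) \<in> E" using simplex_edge[OF S] s t by blast
    have r1: "((u,v),(s,v)) \<in> R" using lift1[OF s(2) f(2,3)] .
    have sv: "(s,v) \<in> E" using R_E r1 by blast
    have "(s,v) \<notin> NE\<^sup>*" using s(2) f(3) Kt by blast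
    then have r2: "((s,v),(s,t)) \<in> R" using lift2[OF t(2) sv] by blast
    have "((s,t),(u,v)) \<in> R" using R_trans[OF r1 r2] R_sym by blast
    then have "sc (s,t) (u,v)" by (rule R_sc)
    then show "f \<in> multiplex_of E VS" using mem_mult s t st f(1) by blast
  qed
qed

lemma caseB_rank:
  assumes cB: "\<forall>u\<in>V. \<forall>v\<in>V. (u,v) \<in> NE\<^sup>*"
    and S: "simplex V E VS" and sp: "spanned (multiplex_of E VS) = V"
  shows "\<exists>s t. s \<noteq> t \<and> VS = {s,t}"
proof -
  have fin: "finite VS" and c2: "card VS \<ge> 2" and VSV: "VS \<subseteq> V"
    using S unfolding simplex_def by auto
  have "\<not> card VS \<le> Suc 0" using c2 by simp
  then obtain s1 s2 where s12: "s1 \<in> VS" "s2 \<in> VS" "s1 \<noteq> s2"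
    using card_le_Suc0_iff_eq[OF fin] by blast
  have "VS = {s1,s2}"
  proof (rule ccontr)
    assume "VS \<noteq> {s1,s2}"
    then obtain s0 where s0: "s0 \<in> VS" "s0 \<noteq> s1" "s0 \<noteq> s2" using s12 by blast
    have e12: "(s1,s2) \<in> E" using simplex_edge[OF S] s12 by blast
    define X where "X = {z. \<exists>w. sc (s1,s2) (z,w)}"
    have s1X: "s1 \<in> X" unfolding X_def using sc_refl e12 by blast
    have e01: "(s0,s1) \<in> E" and e02: "(s0,s2) \<in> E"
      using simplex_edge[OF S] s12 s0 by auto
    have n1: "\<not> sc (s1,s2) (s0,s1)"
      using simplex_distinct[OF S s12(1,2) s0(1) s12(1) e12 e01] s0 s12
      by (auto simp: doubleton_eq_iff)
    have n2: "\<not> sc (s1,s2) (s0,s2)"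
      using simplex_distinct[OF S s12(1,2) s0(1) s12(2) e12 e02] s0 s12
      by (auto simp: doubleton_eq_iff)
    have s0X: "s0 \<notin> X"
      unfolding X_def using TLc_ne[OF e01 e12 e02 n1 n2] by blast
    have closed: "v \<in> X" if zX: "z \<in> X" and zv: "(z,v) \<in> NE" for z v
    proof (rule ccontr)
      assume vX: "v \<notin> X"
      obtain w0 where w0: "sc (s1,s2) (z,w0)" using zX unfolding X_def by blast
      have vV: "v \<in> V" and nzv: "(z,v) \<notin> E" using zv unfolding NE_def by auto
      obtain si sj w where ij: "si \<in> VS" "sj \<in> VS" "(si,sj) \<in> E" "sc (si,sj) (v,w)"
        using span_ex[OF sp vV] by blast
      have sij: "si \<noteq> sj" using ij(3) irr by auto
      have helper: "(p,v) \<in> E" if p: "p \<in> VS" "p \<noteq> si" "p \<noteq> sj" for p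
      proof -
        have pi: "(p,si) \<in> E" and pj: "(p,sj) \<in> E" using simplex_edge[OF S] p ij by auto
        have m1: "\<not> sc (si,sj) (p,si)"
          using simplex_distinct[OF S ij(1,2) p(1) ij(1) ij(3) pi] p sij
          by (auto simp: doubleton_eq_iff)
        have m2: "\<not> sc (si,sj) (p,sj)"
          using simplex_distinct[OF S ij(1,2) p(1) ij(2) ij(3) pj] p sij
          by (auto simp: doubleton_eq_iff)
        show ?thesis using TLc[OF pi ij(3) pj m1 m2 ij(4)] by blast
      qed
      have nv: "\<forall>x y. sc (s1,s2) (x,y) \<longrightarrow> v \<noteq> x \<and> v \<noteq> y"
        using vX sc_swap2 unfolding X_def by blast
      have nv': "\<forall>x y. sc (s2,s1) (x,y) \<longrightarrow> v \<noteq> x \<and> v \<noteq> y"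
        using nv sc_swap1 by blast
      consider "s1 \<noteq> si \<and> s1 \<noteq> sj" | "s2 \<noteq> si \<and> s2 \<noteq> sj" | "(si,sj) = (s1,s2) \<or> (si,sj) = (s2,s1)"
        using s12(3) sij by blast
      then show False
      proof cases
        case 1
        then have "(v,s1) \<in> E" using helper s12 symE by blast
        then have "(v,z) \<in> E" using modl[OF e12 nv _ w0] by blast
        then show False using nzv symE by blast
      next
        case 2
        then have "(v,s2) \<in> E" using helper s12 symE by blast
        moreover have "sc (s2,s1) (z,w0)" using w0 sc_swap1 by blast
        ultimately have "(v,z) \<in> E" using modl[OF symE[OF e12] nv'] by blast
        then show False using nzv symE by blast
      next
        case 3
        then have "sc (s1,s2) (v,w)" using ij(4) sc_swap1 by blast
        then show False using vX unfolding X_def by blast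
      qed
    qed
    have "(s1,s0) \<in> NE\<^sup>*" using cB VSV s12 s0 by blast
    then have "s0 \<in> X"
    proof (induction rule: rtrancl_induct)
      case base then show ?case using s1X .
    next
      case (step y z) then show ?case using closed by blast
    qed
    then show False using s0X by blast
  qed
  then show ?thesis using s12 by blast
qed

lemma mult2:
  assumes "s \<noteq> t" "(s,t) \<in> E"
  shows "multiplex_of E {s,t} = {f. sc (s,t) f}"
proof (intro set_eqI iffI)
  fix f assume "f \<in> multiplex_of E {s,t}"
  then obtain a b where ab: "a \<in> {s,t}" "b \<in> {s,t}" "(a,b) \<in> E" "sc (a,b) f"
    using mem_mult by blast
  have "a \<noteq> b" using ab(3) irr by auto
  then have "(a,b) = (s,t) \<or> (a,b) = (t,s)" using ab by auto
  then show "f \<in> {f. sc (s,t) f}" using ab(4) sc_swap1[of t s f] by auto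
next
  fix f assume "f \<in> {f. sc (s,t) f}"
  then show "f \<in> multiplex_of E {s,t}" using mem_mult assms by blast
qed

lemma span_cls:
  assumes "spanned {f. sc e f} = V" "v \<in> V"
  shows "\<exists>w. sc e (v,w)"
proof -
  obtain f where f: "sc e f" "v = fst f \<or> v = snd f"
    using assms unfolding spanned_def by auto
  then show ?thesis using sc_swap2 by (metis prod.collapse)
qed

lemma uniq_cls:
  assumes e1: "(a,b) \<in> E" and e2E: "e2 \<in> E"
    and sp1: "spanned {f. sc (a,b) f} = V" and sp2: "spanned {f. sc e2 f} = V"
  shows "sc (a,b) e2"
proof (rule ccontr)
  assume ne: "\<not> sc (a,b) e2"
  have aV: "a \<in> V" and bV: "b \<in> V" using E_sub e1 by auto
  obtain c where ac2: "sc e2 (a,c)" using span_cls[OF sp2 aV] by blast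
  have ac: "(a,c) \<in> E" using sc_E ac2 by blast
  have ab_n2: "\<not> sc e2 (a,b)" using ne sc_sym by blast
  have ac_n1: "\<not> sc (a,b) (a,c)" using ne ac2 sc_sym sc_trans by blast
  have bc: "(b,c) \<in> E"
  proof (rule ccontr)
    assume "(b,c) \<notin> E"
    then have "((b,a),(c,a)) \<in> Gamma E" unfolding Gamma_def using e1 ac symE by auto
    then have "sc (b,a) (c,a)" using R_sc by blast
    then have "sc (a,b) (a,c)" using sc_swap1 sc_swap2 by blast
    then show False using ac_n1 by blast
  qed
  show False
  proof (cases "sc (a,b) (b,c)")
    case False
    have m1: "\<not> sc (a,b) (c,a)" using ac_n1 sc_swap2 by blast
    have m2: "\<not> sc (a,b) (c,b)" using False sc_swap2 by blast
    have cV: "c \<in> V" using E_sub ac by auto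
    obtain w where "sc (a,b) (c,w)" using span_cls[OF sp1 cV] by blast
    then show False using TLc_ne[OF symE[OF ac] e1 symE[OF bc] m1 m2] by blast
  next
    case True
    have m1: "\<not> sc (a,c) (b,a)"
    proof
      assume "sc (a,c) (b,a)"
      then have "sc e2 (a,b)" using ac2 sc_trans sc_swap2 by blast
      then show False using ab_n2 by blast
    qed
    have m2: "\<not> sc (a,c) (b,c)"
    proof
      assume "sc (a,c) (b,c)"
      then have "sc (a,b) (a,c)" using True sc_sym sc_trans by blast
      then show False using ac_n1 by blast
    qed
    obtain w where "sc e2 (b,w)" using span_cls[OF sp2 bV] by blast
    then have "sc (a,c) (b,w)" using ac2 sc_sym sc_trans by blast
    then show False using TLc_ne[OF symE[OF e1] ac bc m1 m2] by blast
  qed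
qed

lemma main:
  assumes S1: "simplex V E VS1" and sp1: "spanned (multiplex_of E VS1) = V"
    and S2: "simplex V E VS2" and sp2: "spanned (multiplex_of E VS2) = V"
  shows "multiplex_of E VS1 = multiplex_of E VS2"
proof (cases "\<exists>u\<in>V. \<exists>v\<in>V. (u,v) \<notin> NE\<^sup>*")
  case True
  then show ?thesis using caseA[OF True S1 sp1] caseA[OF True S2 sp2] by simp
next
  case False
  then have cB: "\<forall>u\<in>V. \<forall>v\<in>V. (u,v) \<in> NE\<^sup>*" by blast
  obtain s t where st: "s \<noteq> t" "VS1 = {s,t}" using caseB_rank[OF cB S1 sp1] by blast
  obtain s' t' where st': "s' \<noteq> t'" "VS2 = {s',t'}" using caseB_rank[OF cB S2 sp2] by blast
  have e: "(s,t) \<in> E" using simplex_edge[OF S1] st by auto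
  have e': "(s',t') \<in> E" using simplex_edge[OF S2] st' by auto
  have m1: "multiplex_of E VS1 = {f. sc (s,t) f}" using mult2[OF st(1) e] st(2) by simp
  have m2: "multiplex_of E VS2 = {f. sc (s',t') f}" using mult2[OF st'(1) e'] st'(2) by simp
  have "sc (s,t) (s',t')" using uniq_cls[OF e e'] sp1 sp2 m1 m2 by simp
  then have "{f. sc (s,t) f} = {f. sc (s',t') f}" using sc_sym sc_trans by blast
  then show ?thesis using m1 m2 by simp
qed

end

theorem corollary4p6:
  assumes "undirected_graph V E"
    and "is_multiplex V E M1" and "spanned M1 = V"
    and "is_multiplex V E M2" and "spanned M2 = V"
  shows "M1 = M2"
proof -
  interpret ugr V E using assms(1) by unfold_locales
  obtain VS1 where "simplex V E VS1" "M1 = multiplex_of E VS1"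
    using assms(2) unfolding is_multiplex_def by blast
  moreover obtain VS2 where "simplex V E VS2" "M2 = multiplex_of E VS2"
    using assms(4) unfolding is_multiplex_def by blast
  ultimately show ?thesis using main assms(3,5) by simp
qed

end
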